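(* Let $G$ be a star graph on $n+1$ vertices (one center vertex adjacent to $n$ leaves and no other edges), and let $\Delta$ be the Stanley–Reisner complex of $\mathcal{F}(G)$ (the independence complex of $G$). Then $$\mu_2(\Delta,t)=t^2\sum_{i=1}^{n-2}\binom{n}{i+2}t^i=t^2\sum_{i=1}^{n-2}f_{i+1}t^i,$$ where $f_k$ is the number of $k$-dimensional faces of $\Delta$.
   Context: For a graph $G$ on $[N]$, $\mathcal{F}(G)=(x_ix_j:\{i,j\}\in E(G))\subset\mathbb{K}[x_1,\dots,x_N]$; its Stanley–Reisner complex is the simplicial complex whose faces are the sets $\tau$ with $x_\tau=\prod_{j\in\tau}x_j\notin\mathcal{F}(G)$ (the independent sets). For an ideal $I$, the $m$-th symbolic defect is $\mathrm{sdefect}(I,m)=\mu(I^{(m)}/I^m)$, where $\mu$ is the minimal number of generators and, for squarefree monomial $I$, $I^{(m)}=\bigcap_{P\in\mathrm{Ass}(I)}P^m$. For a $d$-dimensional simplicial complex $\Delta$, let $\Delta^{[i]}$ be the simplicial complex whose facets are the $i$-dimensional faces of $\Delta$, and $\mathcal{F}(\Delta^{[i]})$ its facet ideal (generated by $x_\sigma$ for $\sigma$ an $i$-face). The $m$-th symbolic defect polynomial is $\mu_m(\Delta,t)=t^2\sum_{i=1}^{d-1}\mathrm{sdefect}(\mathcal{F}(\Delta^{[i]}),m)\,t^i$. *)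

theory Defs
  imports Main "HOL-Library.Poly_Mapping" "HOL-Computational_Algebra.Polynomial"
begin

definition ideal_span :: "'r::comm_ring_1 set \<Rightarrow> 'r set" where
  "ideal_span S = {(\<Sum>s\<in>F. r s * s) | F r. finite F \<and> F \<subseteq> S}"

definition is_ideal :: "'r::comm_ring_1 set \<Rightarrow> bool" where
  "is_ideal I \<longleftrightarrow> 0 \<in> I \<and> (\<forall>x\<in>I. \<forall>y\<in>I. x + y \<in> I) \<and> (\<forall>r. \<forall>x\<in>I. r * x \<in> I)"

definition prime_ideal :: "'r::comm_ring_1 set \<Rightarrow> bool" where
  "prime_ideal P \<longleftrightarrow> is_ideal P \<and> 1 \<notin> P \<and> (\<forall>a b. a * b \<in> P \<longrightarrow> a \<in> P \<or> b \<in> P)"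

definition ass_primes :: "'r::comm_ring_1 set \<Rightarrow> 'r set set" where
  "ass_primes I = {P. prime_ideal P \<and> (\<exists>f. P = {g. g * f \<in> I})}"

definition ideal_pow :: "'r::comm_ring_1 set \<Rightarrow> nat \<Rightarrow> 'r set" where
  "ideal_pow I m = ideal_span {prod_list xs | xs. length xs = m \<and> set xs \<subseteq> I}"

definition symbolic_power :: "'r::comm_ring_1 set \<Rightarrow> nat \<Rightarrow> 'r set" where
  "symbolic_power I m = (\<Inter>P\<in>ass_primes I. ideal_pow P m)"

text \<open>Minimal number of generators of the module J/I (for ideals I \<subseteq> J).\<close>
definition mu_quot :: "'r::comm_ring_1 set \<Rightarrow> 'r set \<Rightarrow> nat" where
  "mu_quot J I = (LEAST k. \<exists>S. finite S \<and> card S = k \<and> S \<subseteq> J \<and> ideal_span (S \<union> I) = J)"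

definition sdefect :: "'r::comm_ring_1 set \<Rightarrow> nat \<Rightarrow> nat" where
  "sdefect I m = mu_quot (symbolic_power I m) (ideal_pow I m)"

definition var :: "'v \<Rightarrow> (('v \<Rightarrow>\<^sub>0 nat) \<Rightarrow>\<^sub>0 'k::field)" where
  "var v = Poly_Mapping.single (Poly_Mapping.single v 1) 1"

definition sqmon :: "'v set \<Rightarrow> (('v \<Rightarrow>\<^sub>0 nat) \<Rightarrow>\<^sub>0 'k::field)" where
  "sqmon \<tau> = (\<Prod>v\<in>\<tau>. var v)"

definition edge_ideal :: "'v set set \<Rightarrow> (('v \<Rightarrow>\<^sub>0 nat) \<Rightarrow>\<^sub>0 'k::field) set" where
  "edge_ideal E = ideal_span {var u * var v | u v. {u, v} \<in> E}"

definition sr_complex :: "(('v::finite \<Rightarrow>\<^sub>0 nat) \<Rightarrow>\<^sub>0 'k::field) set \<Rightarrow> 'v set set" where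
  "sr_complex I = {\<tau>. sqmon \<tau> \<notin> I}"

definition cdim :: "'v set set \<Rightarrow> nat" where
  "cdim \<Delta> = Max (card ` \<Delta>) - 1"

text \<open>Facet ideal of \<Delta>^[i]: generated by x_\<sigma> for the i-dimensional faces \<sigma>.\<close>
definition skel_ideal :: "'v set set \<Rightarrow> nat \<Rightarrow> (('v \<Rightarrow>\<^sub>0 nat) \<Rightarrow>\<^sub>0 'k::field) set" where
  "skel_ideal \<Delta> i = ideal_span {sqmon \<sigma> | \<sigma>. \<sigma> \<in> \<Delta> \<and> card \<sigma> = i + 1}"

definition fvec :: "'v set set \<Rightarrow> nat \<Rightarrow> nat" where
  "fvec \<Delta> k = card {\<sigma>\<in>\<Delta>. card \<sigma> = k + 1}"

definition sdefect_poly :: "'k::field itself \<Rightarrow> 'v set set \<Rightarrow> nat \<Rightarrow> int poly" where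
  "sdefect_poly K \<Delta> m = monom 1 2 *
     (\<Sum>i\<in>{1..cdim \<Delta> - 1}. monom (int (sdefect (skel_ideal \<Delta> i :: (('v \<Rightarrow>\<^sub>0 nat) \<Rightarrow>\<^sub>0 'k) set) m)) i)"

end

theory Submission
  imports Defs "HOL-Library.Function_Algebras"
begin

lemma span_elim: "x \<in> ideal_span S \<Longrightarrow> \<exists>F r. finite F \<and> F \<subseteq> S \<and> x = (\<Sum>s\<in>F. r s * s)"
  unfolding ideal_span_def by (simp only: mem_Collect_eq) metis

lemma span_intro: "finite F \<Longrightarrow> F \<subseteq> S \<Longrightarrow> (\<Sum>s\<in>F. r s * s) \<in> ideal_span S"
  unfolding ideal_span_def by blast

lemma span_is_ideal: "is_ideal (ideal_span (S::'r::comm_ring_1 set))"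
proof -
  have add: "x + y \<in> ideal_span S" if hx: "x \<in> ideal_span S" and hy: "y \<in> ideal_span S" for x y
  proof -
    obtain F r where F: "finite F" "F \<subseteq> S" "x = (\<Sum>s\<in>F. r s * s)"
      using span_elim[OF hx] by blast
    obtain G r' where G: "finite G" "G \<subseteq> S" "y = (\<Sum>s\<in>G. r' s * s)"
      using span_elim[OF hy] by blast
    define q where "q s = (if s \<in> F then r s else 0) + (if s \<in> G then r' s else 0)" for s
    have "(\<Sum>s\<in>F\<union>G. (if s \<in> F then r s else 0) * s) = (\<Sum>s\<in>F. r s * s)"
      by (rule sum.mono_neutral_cong_right) (use F G in auto)
    moreover have "(\<Sum>s\<in>F\<union>G. (if s \<in> G then r' s else 0) * s) = (\<Sum>s\<in>G. r' s * s)"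
      by (rule sum.mono_neutral_cong_right) (use F G in auto)
    ultimately have "x + y = (\<Sum>s\<in>F\<union>G. q s * s)"
      using F G by (simp add: q_def distrib_right sum.distrib)
    then show ?thesis using span_intro[of "F\<union>G" S q] F G by simp
  qed
  have mul: "a * x \<in> ideal_span S" if hx: "x \<in> ideal_span S" for a x
  proof -
    obtain F r where F: "finite F" "F \<subseteq> S" "x = (\<Sum>s\<in>F. r s * s)"
      using span_elim[OF hx] by blast
    have "a * x = (\<Sum>s\<in>F. (a * r s) * s)" using F by (simp add: sum_distrib_left mult.assoc)
    then show ?thesis using span_intro[of F S "\<lambda>s. a * r s"] F by simp
  qed
  have "0 \<in> ideal_span S" using span_intro[of "{}" S] by simp
  then show ?thesis using add mul unfolding is_ideal_def by blast
qed

lemma ideal_sum: "is_ideal K \<Longrightarrow> (\<And>x. x \<in> F \<Longrightarrow> g x \<in> K) \<Longrightarrow> sum g F \<in> K"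
proof (induction F rule: infinite_finite_induct)
  case (infinite A) then show ?case by (simp add: is_ideal_def)
next
  case empty then show ?case by (simp add: is_ideal_def)
next
  case (insert x F) then show ?case by (simp add: is_ideal_def)
qed

lemma ideal_mult_left: "is_ideal K \<Longrightarrow> x \<in> K \<Longrightarrow> r * x \<in> K"
  by (simp add: is_ideal_def)

lemma ideal_mult_right: "is_ideal K \<Longrightarrow> x \<in> K \<Longrightarrow> x * r \<in> K"
  by (simp add: is_ideal_def mult.commute)

lemma ideal_add: "is_ideal K \<Longrightarrow> x \<in> K \<Longrightarrow> y \<in> K \<Longrightarrow> x + y \<in> K"
  by (simp add: is_ideal_def)

lemma ideal_zero: "is_ideal K \<Longrightarrow> 0 \<in> K"
  by (simp add: is_ideal_def)

lemma ideal_neg: "is_ideal K \<Longrightarrow> x \<in> K \<Longrightarrow> - x \<in> K"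
  using ideal_mult_left[of K x "-1"] by simp

lemma ideal_diff: "is_ideal K \<Longrightarrow> x \<in> K \<Longrightarrow> y \<in> K \<Longrightarrow> x - y \<in> K"
  using ideal_add[of K x "-y"] ideal_neg[of K y] by simp

lemma span_base: "s \<in> S \<Longrightarrow> s \<in> ideal_span (S::'r::comm_ring_1 set)"
  using span_intro[of "{s}" S "\<lambda>_. 1"] by simp

lemma span_least: "is_ideal K \<Longrightarrow> S \<subseteq> K \<Longrightarrow> ideal_span S \<subseteq> K"
  by (auto dest!: span_elim intro!: ideal_sum ideal_mult_left)

lemma span_mono: "S \<subseteq> T \<Longrightarrow> ideal_span S \<subseteq> ideal_span (T::'r::comm_ring_1 set)"
  by (rule span_least[OF span_is_ideal]) (use span_base in blast)

lemma ideal_pow_is_ideal: "is_ideal (ideal_pow P m)"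
  unfolding ideal_pow_def by (rule span_is_ideal)

lemma ideal_pow_mono: "P \<subseteq> Q \<Longrightarrow> ideal_pow P m \<subseteq> ideal_pow Q m"
  unfolding ideal_pow_def by (rule span_mono) blast

lemma ideal_pow2_gen: "x \<in> P \<Longrightarrow> y \<in> P \<Longrightarrow> x * y \<in> ideal_pow P 2"
  unfolding ideal_pow_def
  by (rule span_base) (rule CollectI, rule exI[of _ "[x,y]"], simp add: numeral_2_eq_2)

lemma ideal_pow2_sub:
  assumes "is_ideal K" and that: "\<And>x y. x \<in> P \<Longrightarrow> y \<in> P \<Longrightarrow> x * y \<in> K"
  shows "ideal_pow P 2 \<subseteq> K"
  unfolding ideal_pow_def
proof (rule span_least[OF assms(1)], rule subsetI)
  fix z assume "z \<in> {prod_list xs |xs. length xs = 2 \<and> set xs \<subseteq> P}"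
  then obtain xs where xs: "z = prod_list xs" "length xs = 2" "set xs \<subseteq> P" by blast
  then obtain x y where "xs = [x, y]"
    by (metis (no_types, opaque_lifting) One_nat_def Suc_1 length_0_conv length_Suc_conv)
  with xs show "z \<in> K" using that by auto
qed

lemma is_ideal_Inter: "(\<And>P. P \<in> X \<Longrightarrow> is_ideal P) \<Longrightarrow> is_ideal (\<Inter> X)"
  unfolding is_ideal_def by blast

lemma prime_prod:
  assumes P: "prime_ideal P"
  shows "finite F \<Longrightarrow> prod g F \<in> P \<Longrightarrow> \<exists>x\<in>F. g x \<in> P"
proof (induction F rule: finite_induct)
  case empty then show ?case using P by (simp add: prime_ideal_def)
next
  case (insert x F) then show ?case using P by (auto simp: prime_ideal_def)
qed

type_synonym ('v,'k) mp = "('v \<Rightarrow>\<^sub>0 nat) \<Rightarrow>\<^sub>0 'k"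

definition mon :: "('v \<Rightarrow>\<^sub>0 nat) \<Rightarrow> ('v,'k::field) mp" where
  "mon a = Poly_Mapping.single a 1"

definition mideal :: "(('v \<Rightarrow>\<^sub>0 nat) \<Rightarrow> bool) \<Rightarrow> ('v,'k::field) mp set" where
  "mideal U = {f. \<forall>a\<in>Poly_Mapping.keys f. U a}"

definition ex :: "'v set \<Rightarrow> ('v \<Rightarrow>\<^sub>0 nat)" where
  "ex \<sigma> = (\<Sum>v\<in>\<sigma>. Poly_Mapping.single v 1)"

lemma mon_mult: "mon a * mon b = (mon (a + b) :: ('v,'k::field) mp)"
  by (simp add: mon_def mult_single)

lemma var_mon: "var v = mon (Poly_Mapping.single v 1)"
  by (simp add: var_def mon_def)

lemma sqmon_mon: "finite \<sigma> \<Longrightarrow> sqmon \<sigma> = (mon (ex \<sigma>) :: ('v,'k::field) mp)"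
proof (induction \<sigma> rule: finite_induct)
  case empty then show ?case by (simp add: sqmon_def ex_def mon_def)
next
  case (insert x F)
  then show ?case by (simp add: sqmon_def ex_def var_mon mon_mult add.commute)
qed

lemma lookup_ex: "finite \<sigma> \<Longrightarrow> Poly_Mapping.lookup (ex \<sigma>) v = (if v \<in> \<sigma> then 1 else 0)"
  by (simp add: ex_def lookup_sum lookup_single when_def)

lemma keys_mon [simp]: "Poly_Mapping.keys (mon a :: ('v,'k::field) mp) = {a}"
  by (simp add: mon_def)

lemma mon_inj: "(mon a :: ('v,'k::field) mp) = mon b \<Longrightarrow> a = b"
  by (metis keys_mon singleton_inject)

lemma ex_inj: "finite \<sigma> \<Longrightarrow> finite \<tau> \<Longrightarrow> ex \<sigma> = ex \<tau> \<Longrightarrow> \<sigma> = \<tau>"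
  by (metis lookup_ex one_neq_zero subsetI subset_antisym)

lemma mideal_ideal:
  assumes up: "\<And>a b. U a \<Longrightarrow> U (b + a)"
  shows "is_ideal (mideal U :: ('v,'k::field) mp set)"
  unfolding is_ideal_def mideal_def
proof (intro conjI ballI allI)
  show "0 \<in> {f :: ('v,'k) mp. \<forall>a\<in>Poly_Mapping.keys f. U a}" by simp
next
  fix x y :: "('v,'k) mp"
  assume "x \<in> {f. \<forall>a\<in>Poly_Mapping.keys f. U a}" "y \<in> {f. \<forall>a\<in>Poly_Mapping.keys f. U a}"
  then show "x + y \<in> {f. \<forall>a\<in>Poly_Mapping.keys f. U a}" using keys_add[of x y] by auto
next
  fix r x :: "('v,'k) mp"
  assume "x \<in> {f. \<forall>a\<in>Poly_Mapping.keys f. U a}"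
  then show "r * x \<in> {f. \<forall>a\<in>Poly_Mapping.keys f. U a}" using keys_mult[of r x] up by auto
qed

lemma mon_mideal [simp]: "mon a \<in> mideal U \<longleftrightarrow> U a"
  by (simp add: mideal_def)

lemma poly_expand: "f = (\<Sum>a\<in>Poly_Mapping.keys f. Poly_Mapping.single a (Poly_Mapping.lookup f a))"
  by (rule poly_mapping_eqI) (simp add: lookup_sum lookup_single when_def in_keys_iff)

lemma single_as_mon: "Poly_Mapping.single a c = Poly_Mapping.single 0 c * (mon a :: ('v,'k::field) mp)"
  by (simp add: mon_def mult_single)

lemma in_ideal_by_monomials:
  assumes K: "is_ideal K" and h: "\<And>a. a \<in> Poly_Mapping.keys f \<Longrightarrow> (mon a :: ('v,'k::field) mp) \<in> K"
  shows "f \<in> K"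
proof -
  have "(\<Sum>a\<in>Poly_Mapping.keys f. Poly_Mapping.single a (Poly_Mapping.lookup f a)) \<in> K"
  proof (rule ideal_sum[OF K])
    fix a assume "a \<in> Poly_Mapping.keys f"
    then show "Poly_Mapping.single a (Poly_Mapping.lookup f a) \<in> K"
      using single_as_mon[of a "Poly_Mapping.lookup f a"] ideal_mult_left[OF K h] by metis
  qed
  then show ?thesis using poly_expand[of f] by simp
qed

lemma mideal_mult:
  assumes "f \<in> mideal U" "g \<in> mideal V" "\<And>a b. U a \<Longrightarrow> V b \<Longrightarrow> W (a + b)"
  shows "f * g \<in> (mideal W :: ('v,'k::field) mp set)"
  using assms keys_mult[of f g] unfolding mideal_def by auto

lemma lookup_mult_mon: "Poly_Mapping.lookup (g * mon b) (u + b) = Poly_Mapping.lookup (g :: ('v,'k::field) mp) u"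
proof -
  have "g * mon b = (\<Sum>a\<in>Poly_Mapping.keys g. Poly_Mapping.single (a + b) (Poly_Mapping.lookup g a))"
    by (subst poly_expand[of g]) (simp add: sum_distrib_right mon_def mult_single)
  then show ?thesis
    by (simp add: lookup_sum lookup_single when_def in_keys_iff)
qed

definition restr :: "(('v \<Rightarrow>\<^sub>0 nat) \<Rightarrow> bool) \<Rightarrow> ('v,'k::field) mp \<Rightarrow> ('v,'k) mp" where
  "restr Q f = (\<Sum>a\<in>{a\<in>Poly_Mapping.keys f. Q a}. Poly_Mapping.single a (Poly_Mapping.lookup f a))"

lemma restr_keys: "Poly_Mapping.keys (restr Q f) \<subseteq> {a\<in>Poly_Mapping.keys f. Q a}"
  unfolding restr_def by (rule subset_trans[OF keys_sum]) auto

lemma restr_split: "f = restr Q f + restr (\<lambda>a. \<not> Q a) f"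
proof -
  have "(\<Sum>a\<in>Poly_Mapping.keys f. Poly_Mapping.single a (Poly_Mapping.lookup f a)) =
    (\<Sum>a\<in>{a\<in>Poly_Mapping.keys f. Q a}. Poly_Mapping.single a (Poly_Mapping.lookup f a)) + (\<Sum>a\<in>{a\<in>Poly_Mapping.keys f. \<not> Q a}. Poly_Mapping.single a (Poly_Mapping.lookup f a))"
  proof -
    have e: "Poly_Mapping.keys f = {a\<in>Poly_Mapping.keys f. Q a} \<union> {a\<in>Poly_Mapping.keys f. \<not> Q a}" by auto
    show ?thesis by (subst e, rule sum.union_disjoint) auto
  qed
  then show ?thesis unfolding restr_def using poly_expand[of f] by simp
qed

lemma restr_single: "restr (\<lambda>x. x = a) f = Poly_Mapping.single a (Poly_Mapping.lookup f a)"
proof (cases "a \<in> Poly_Mapping.keys f")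
  case True
  then have "{x\<in>Poly_Mapping.keys f. x = a} = {a}" by auto
  then show ?thesis by (simp add: restr_def)
next
  case False
  then have "{x\<in>Poly_Mapping.keys f. x = a} = {}" by auto
  then show ?thesis using False by (simp add: restr_def in_keys_iff)
qed

lemma no_zero_div:
  fixes f g :: "('v::finite,'k::field) mp"
  assumes f0: "f \<noteq> 0" and g0: "g \<noteq> 0"
  shows "f * g \<noteq> 0"
proof -
  obtain h :: "'v \<Rightarrow> nat" where h: "inj h"
    using finite_imp_inj_to_nat_seg[of "UNIV :: 'v set"] by auto
  define E :: "('v \<Rightarrow>\<^sub>0 nat) \<Rightarrow> (nat \<Rightarrow>\<^sub>0 nat)" where
    "E a = (\<Sum>v\<in>UNIV. Poly_Mapping.single (h v) (Poly_Mapping.lookup a v))" for a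
  have Eadd: "E (x + y) = E x + E y" for x y
    by (simp add: E_def lookup_add single_add sum.distrib)
  have Elook: "Poly_Mapping.lookup (E x) (h w) = Poly_Mapping.lookup x w" for x w
  proof -
    have "Poly_Mapping.lookup (E x) (h w) = (\<Sum>v\<in>UNIV. if v = w then Poly_Mapping.lookup x v else 0)"
      unfolding E_def lookup_sum lookup_single
      by (rule sum.cong) (auto simp: when_def inj_eq[OF h])
    then show ?thesis by simp
  qed
  have Einj: "E x = E y \<Longrightarrow> x = y" for x y
    by (rule poly_mapping_eqI) (metis Elook)
  have fin: "finite (Poly_Mapping.keys p)" for p :: "('v,'k) mp" by simp
  have "\<exists>a\<in>Poly_Mapping.keys p. \<forall>a'\<in>Poly_Mapping.keys p. E a' \<le> E a" if "p \<noteq> 0" for p :: "('v,'k) mp"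
  proof -
    have ne: "E ` Poly_Mapping.keys p \<noteq> {}" using that by simp
    have "Max (E ` Poly_Mapping.keys p) \<in> E ` Poly_Mapping.keys p" using ne by (simp add: Max_in)
    then obtain a where "a \<in> Poly_Mapping.keys p" "E a = Max (E ` Poly_Mapping.keys p)" by auto
    then show ?thesis by (metis Max_ge fin finite_imageI imageI)
  qed
  then obtain a b where a: "a \<in> Poly_Mapping.keys f" "\<And>a'. a' \<in> Poly_Mapping.keys f \<Longrightarrow> E a' \<le> E a"
    and b: "b \<in> Poly_Mapping.keys g" "\<And>b'. b' \<in> Poly_Mapping.keys g \<Longrightarrow> E b' \<le> E b"
    using f0 g0 by metis
  define f' where "f' = restr (\<lambda>x. \<not> x = a) f"
  define g' where "g' = restr (\<lambda>x. \<not> x = b) g"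
  have fs: "f = Poly_Mapping.single a (Poly_Mapping.lookup f a) + f'"
    using restr_split[of f "\<lambda>x. x = a"] restr_single[of a f] f'_def by simp
  have gs: "g = Poly_Mapping.single b (Poly_Mapping.lookup g b) + g'"
    using restr_split[of g "\<lambda>x. x = b"] restr_single[of b g] g'_def by simp
  have kf': "Poly_Mapping.keys f' \<subseteq> {x\<in>Poly_Mapping.keys f. x \<noteq> a}"
    using restr_keys f'_def by blast
  have kg': "Poly_Mapping.keys g' \<subseteq> {x\<in>Poly_Mapping.keys g. x \<noteq> b}"
    using restr_keys g'_def by blast
  have fg: "f * g = Poly_Mapping.single a (Poly_Mapping.lookup f a) * Poly_Mapping.single b (Poly_Mapping.lookup g b)
     + Poly_Mapping.single a (Poly_Mapping.lookup f a) * g' + f' * g"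
  proof -
    have "f * g = Poly_Mapping.single a (Poly_Mapping.lookup f a) * g + f' * g"
      using fs by (metis distrib_right)
    moreover have "Poly_Mapping.single a (Poly_Mapping.lookup f a) * g = Poly_Mapping.single a (Poly_Mapping.lookup f a) * Poly_Mapping.single b (Poly_Mapping.lookup g b)
     + Poly_Mapping.single a (Poly_Mapping.lookup f a) * g'"
      using gs by (metis distrib_left)
    ultimately show ?thesis by simp
  qed
  have t2: "a + b \<notin> Poly_Mapping.keys (Poly_Mapping.single a (Poly_Mapping.lookup f a) * g')"
  proof
    assume "a + b \<in> Poly_Mapping.keys (Poly_Mapping.single a (Poly_Mapping.lookup f a) * g')"
    then obtain x y where "x \<in> Poly_Mapping.keys (Poly_Mapping.single a (Poly_Mapping.lookup f a))"
      "y \<in> Poly_Mapping.keys g'" "a + b = x + y"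
      using keys_mult by blast
    then show False using kg' by (auto split: if_splits)
  qed
  have t3: "a + b \<notin> Poly_Mapping.keys (f' * g)"
  proof
    assume "a + b \<in> Poly_Mapping.keys (f' * g)"
    then obtain x y where xy: "x \<in> Poly_Mapping.keys f'" "y \<in> Poly_Mapping.keys g" "a + b = x + y"
      using keys_mult by blast
    then have x: "x \<in> Poly_Mapping.keys f" "x \<noteq> a" using kf' by auto
    have le1: "E x \<le> E a" using a(2) x by simp
    have le2: "E y \<le> E b" using b(2) xy by simp
    have eq: "E x + E y = E a + E b" using xy(3) Eadd by metis
    show False
    proof (cases "E x = E a")
      case True then show ?thesis using Einj x by blast
    next
      case False
      then have "E x < E a" using le1 by simp
      then have "E x + E y < E a + E y" by (rule add_strict_right_mono)
      also have "\<dots> \<le> E a + E b" using le2 by (rule add_left_mono)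
      finally show False using eq by simp
    qed
  qed
  have "Poly_Mapping.lookup (f * g) (a + b) = Poly_Mapping.lookup f a * Poly_Mapping.lookup g b"
    using t2 t3 unfolding fg by (simp add: lookup_add mult_single in_keys_iff)
  moreover have "Poly_Mapping.lookup f a * Poly_Mapping.lookup g b \<noteq> 0"
    using a(1) b(1) by (simp add: in_keys_iff)
  ultimately show ?thesis by auto
qed

definition PA :: "'v set \<Rightarrow> ('v,'k::field) mp set" where
  "PA A = ideal_span {var j | j. j \<in> A}"

definition VA :: "'v set \<Rightarrow> ('v \<Rightarrow>\<^sub>0 nat) \<Rightarrow> bool" where
  "VA A a \<longleftrightarrow> (\<exists>j\<in>A. 1 \<le> Poly_Mapping.lookup a j)"

lemma split_exp: "(\<And>v. Poly_Mapping.lookup b v \<le> Poly_Mapping.lookup a v) \<Longrightarrow> a = (a - b) + (b :: 'v \<Rightarrow>\<^sub>0 nat)"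
  by (rule poly_mapping_eqI) (simp add: lookup_add lookup_minus)

lemma mon_dvd_in:
  assumes K: "is_ideal K" and le: "\<And>v. Poly_Mapping.lookup b v \<le> Poly_Mapping.lookup a v"
    and b: "(mon b :: ('v,'k::field) mp) \<in> K"
  shows "(mon a :: ('v,'k) mp) \<in> K"
proof -
  have "mon a = mon (a - b) * (mon b :: ('v,'k) mp)"
    using split_exp[OF le] mon_mult[of "a - b" b] by metis
  then show ?thesis using ideal_mult_left[OF K b] by metis
qed

lemma VA_up: "VA A a \<Longrightarrow> VA A (b + a)"
  unfolding VA_def by (auto simp: lookup_add) (meson le_add2 order_trans)

lemma PA_eq: "PA A = (mideal (VA A) :: ('v,'k::field) mp set)"
proof
  show "PA A \<subseteq> mideal (VA A)"
    unfolding PA_def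
    by (rule span_least[OF mideal_ideal[of "VA A", OF VA_up]]) (auto simp: var_mon VA_def lookup_single when_def)
next
  show "mideal (VA A) \<subseteq> (PA A :: ('v,'k) mp set)"
  proof
    fix f :: "('v,'k) mp" assume f: "f \<in> mideal (VA A)"
    show "f \<in> PA A"
    proof (rule in_ideal_by_monomials)
      show "is_ideal (PA A :: ('v,'k) mp set)" unfolding PA_def by (rule span_is_ideal)
    next
      fix a assume "a \<in> Poly_Mapping.keys f"
      then have "VA A a" using f by (simp add: mideal_def)
      then obtain j where j: "j \<in> A" "1 \<le> Poly_Mapping.lookup a j" by (auto simp: VA_def)
      have "(mon (Poly_Mapping.single j 1) :: ('v,'k) mp) \<in> PA A"
        unfolding PA_def using j(1) by (intro span_base) (auto simp: var_mon)
      then show "(mon a :: ('v,'k) mp) \<in> PA A"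
        by (rule mon_dvd_in[rotated 2]) (use j in \<open>auto simp: lookup_single when_def PA_def span_is_ideal\<close>)
    qed
  qed
qed

lemma mideal_inter_zero:
  assumes "f \<in> mideal U" "f \<in> mideal (\<lambda>a. \<not> U a)" shows "f = 0"
proof -
  have "Poly_Mapping.keys f = {}" using assms unfolding mideal_def by auto
  then show ?thesis by simp
qed

lemma PA_prime: "prime_ideal (PA A :: ('v::finite,'k::field) mp set)"
proof -
  let ?P = "PA A :: ('v,'k) mp set"
  have P: "is_ideal ?P" unfolding PA_def by (rule span_is_ideal)
  have one: "1 \<notin> ?P"
  proof
    assume "1 \<in> ?P"
    then have "mon 0 \<in> ?P" by (simp add: mon_def)
    then show False by (simp add: PA_eq VA_def)
  qed
  have "x \<in> ?P \<or> y \<in> ?P" if xy: "x * y \<in> ?P" for x y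
  proof (rule ccontr)
    assume nn: "\<not> (x \<in> ?P \<or> y \<in> ?P)"
    define x1 where "x1 = restr (VA A) x"
    define x0 where "x0 = restr (\<lambda>a. \<not> VA A a) x"
    define y1 where "y1 = restr (VA A) y"
    define y0 where "y0 = restr (\<lambda>a. \<not> VA A a) y"
    have x: "x = x1 + x0" unfolding x1_def x0_def by (rule restr_split)
    have y: "y = y1 + y0" unfolding y1_def y0_def by (rule restr_split)
    have x1P: "x1 \<in> ?P" unfolding PA_eq mideal_def x1_def using restr_keys by blast
    have y1P: "y1 \<in> ?P" unfolding PA_eq mideal_def y1_def using restr_keys by blast
    have x0N: "x0 \<in> mideal (\<lambda>a. \<not> VA A a)" unfolding mideal_def x0_def using restr_keys by blast
    have y0N: "y0 \<in> mideal (\<lambda>a. \<not> VA A a)" unfolding mideal_def y0_def using restr_keys by blast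
    have x0nz: "x0 \<noteq> 0" using nn x x1P by auto
    have y0nz: "y0 \<noteq> 0" using nn y y1P by auto
    have "x * y = (x1 + x0) * (y1 + y0)" using x y by simp
    also have "\<dots> = x1 * y + x0 * y1 + x0 * y0" using y by (simp add: algebra_simps)
    finally have e: "x0 * y0 = x * y - x1 * y - x0 * y1" by (simp add: algebra_simps)
    have "x * y - x1 * y - x0 * y1 \<in> ?P"
      by (intro ideal_diff[OF P] xy ideal_mult_left[OF P] ideal_mult_right[OF P] x1P y1P)
    then have inP: "x0 * y0 \<in> ?P" using e by simp
    have "x0 * y0 \<in> mideal (\<lambda>a. \<not> VA A a)"
      by (rule mideal_mult[OF x0N y0N]) (auto simp: VA_def lookup_add Suc_le_eq)
    then have "x0 * y0 = 0" using inP unfolding PA_eq by (intro mideal_inter_zero)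
    then show False using no_zero_div[OF x0nz y0nz] by simp
  qed
  then show ?thesis using P one unfolding prime_ideal_def by blast
qed

definition W2 :: "'v set \<Rightarrow> ('v \<Rightarrow>\<^sub>0 nat) \<Rightarrow> bool" where
  "W2 A a \<longleftrightarrow> 2 \<le> (\<Sum>j\<in>A. Poly_Mapping.lookup a j)"

lemma VA_sum: "finite A \<Longrightarrow> VA A a \<Longrightarrow> 1 \<le> (\<Sum>j\<in>A. Poly_Mapping.lookup a j)"
  unfolding VA_def by (meson member_le_sum order_trans zero_le)

lemma PA_pow2: "ideal_pow (PA A) 2 \<subseteq> (mideal (W2 A) :: ('v::finite,'k::field) mp set)"
proof (rule ideal_pow2_sub)
  show "is_ideal (mideal (W2 A) :: ('v,'k) mp set)"
    by (rule mideal_ideal) (auto simp: W2_def lookup_add sum.distrib)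
next
  fix x y :: "('v,'k) mp" assume "x \<in> PA A" "y \<in> PA A"
  then have "x \<in> mideal (VA A)" "y \<in> mideal (VA A)" by (auto simp: PA_eq)
  then show "x * y \<in> mideal (W2 A)"
    by (rule mideal_mult) (auto simp: W2_def lookup_add sum.distrib dest!: VA_sum[rotated])
qed

definition IV :: "'v set \<Rightarrow> nat \<Rightarrow> ('v,'k::field) mp set" where
  "IV L d = ideal_span {sqmon \<sigma> | \<sigma>. \<sigma> \<subseteq> L \<and> card \<sigma> = d}"

definition UI :: "'v set \<Rightarrow> nat \<Rightarrow> ('v \<Rightarrow>\<^sub>0 nat) \<Rightarrow> bool" where
  "UI L d a \<longleftrightarrow> (\<exists>\<sigma>\<subseteq>L. card \<sigma> = d \<and> (\<forall>j\<in>\<sigma>. 1 \<le> Poly_Mapping.lookup a j))"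

definition Afam :: "'v set \<Rightarrow> nat \<Rightarrow> 'v set set" where
  "Afam L d = {A. A \<subseteq> L \<and> card A = card L - d + 1}"

lemma IV_ideal: "is_ideal (IV L d)"
  unfolding IV_def by (rule span_is_ideal)

lemma UI_up:
  assumes "UI L d a" shows "UI L d (b + a)"
proof -
  obtain \<sigma> where s: "\<sigma> \<subseteq> L" "card \<sigma> = d" "\<forall>j\<in>\<sigma>. 1 \<le> Poly_Mapping.lookup a j"
    using assms unfolding UI_def by blast
  then have "\<forall>j\<in>\<sigma>. 1 \<le> Poly_Mapping.lookup (b + a) j" by (auto simp: lookup_add)
  then show ?thesis using s unfolding UI_def by blast
qed

lemma IV_sub: "IV L d \<subseteq> (mideal (UI L d) :: ('v::finite,'k::field) mp set)"
  unfolding IV_def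
proof (rule span_least[OF mideal_ideal[of "UI L d", OF UI_up]])
  show "{sqmon \<sigma> |\<sigma>. \<sigma> \<subseteq> L \<and> card \<sigma> = d} \<subseteq> (mideal (UI L d) :: ('v,'k) mp set)"
  proof
    fix x :: "('v,'k) mp" assume "x \<in> {sqmon \<sigma> |\<sigma>. \<sigma> \<subseteq> L \<and> card \<sigma> = d}"
    then obtain \<sigma> where s: "x = sqmon \<sigma>" "\<sigma> \<subseteq> L" "card \<sigma> = d" by blast
    have "UI L d (ex \<sigma>)" unfolding UI_def using s by (auto simp: lookup_ex)
    then show "x \<in> mideal (UI L d)" using s by (simp add: sqmon_mon)
  qed
qed

lemma colon_ideal: "is_ideal K \<Longrightarrow> is_ideal {g. g * f \<in> K}"
  unfolding is_ideal_def by (auto simp: distrib_right mult.assoc)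

lemma sqmon_insert: "j \<notin> \<sigma> \<Longrightarrow> finite \<sigma> \<Longrightarrow> var j * sqmon \<sigma> = (sqmon (insert j \<sigma>) :: ('v,'k::field) mp)"
  by (simp add: sqmon_def)

lemma lookup_restr: "Poly_Mapping.lookup (restr Q f) a = (if Q a then Poly_Mapping.lookup f a else 0)"
proof -
  have "Poly_Mapping.lookup (restr Q f) a = (\<Sum>x\<in>{x \<in> Poly_Mapping.keys f. Q x}. if x = a then Poly_Mapping.lookup f x else 0)"
    unfolding restr_def lookup_sum lookup_single by (rule sum.cong) (auto simp: when_def)
  also have "\<dots> = (if a \<in> {x \<in> Poly_Mapping.keys f. Q x} then Poly_Mapping.lookup f a else 0)"
    by (simp add: sum.delta)
  finally show ?thesis by (auto simp: in_keys_iff)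
qed

lemma PA_colon:
  fixes L :: "'v::finite set"
  assumes A: "A \<in> Afam L d" and d1: "1 \<le> d" and dn: "d \<le> card L"
  shows "(PA A :: ('v,'k::field) mp set) = {g. g * sqmon (L - A) \<in> IV L d}"
proof -
  have AL: "A \<subseteq> L" and cA: "card A = card L - d + 1" using A by (auto simp: Afam_def)
  have cLA: "card (L - A) = d - 1" using AL cA dn d1 by (simp add: card_Diff_subset)
  have sub: "(PA A :: ('v,'k) mp set) \<subseteq> {g. g * sqmon (L - A) \<in> IV L d}"
    unfolding PA_def
  proof (rule span_least[OF colon_ideal[OF IV_ideal]], rule subsetI)
    fix x :: "('v,'k) mp" assume "x \<in> {var j |j. j \<in> A}"
    then obtain j where j: "x = var j" "j \<in> A" by blast
    have "x * sqmon (L - A) = sqmon (insert j (L - A))" using j by (simp add: sqmon_insert)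
    moreover have "insert j (L - A) \<subseteq> L" "card (insert j (L - A)) = d"
      using j AL cLA d1 by auto
    ultimately show "x \<in> {g. g * sqmon (L - A) \<in> IV L d}"
      unfolding IV_def by (auto intro!: span_base)
  qed
  moreover have "{g. g * sqmon (L - A) \<in> IV L d} \<subseteq> (PA A :: ('v,'k) mp set)"
  proof (rule subsetI, rule ccontr)
    fix g :: "('v,'k) mp" assume g: "g \<in> {g. g * sqmon (L - A) \<in> IV L d}" and gn: "g \<notin> PA A"
    define g1 where "g1 = restr (VA A) g"
    define g0 where "g0 = restr (\<lambda>a. \<not> VA A a) g"
    have gs: "g = g1 + g0" unfolding g1_def g0_def by (rule restr_split)
    have g1P: "g1 \<in> PA A" unfolding PA_eq mideal_def g1_def using restr_keys by blast
    have "g0 \<noteq> 0" using gn gs g1P by auto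
    then obtain u where u: "u \<in> Poly_Mapping.keys g0" by (metis keys_eq_empty ex_in_conv)
    have nu: "\<not> VA A u" using u restr_keys unfolding g0_def by blast
    have "g1 * sqmon (L - A) \<in> IV L d" using sub g1P by blast
    then have "g0 * sqmon (L - A) \<in> IV L d"
      using g gs ideal_diff[OF IV_ideal, of "g * sqmon (L - A)" L d "g1 * sqmon (L - A)"]
      by (simp add: algebra_simps)
    then have inM: "g0 * mon (ex (L - A)) \<in> (mideal (UI L d) :: ('v,'k) mp set)"
      using IV_sub by (auto simp: sqmon_mon)
    have "Poly_Mapping.lookup (g0 * mon (ex (L - A))) (u + ex (L - A)) \<noteq> 0"
      using u by (simp add: lookup_mult_mon in_keys_iff)
    then have "UI L d (u + ex (L - A))" using inM unfolding mideal_def by (auto simp: in_keys_iff)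
    then obtain \<sigma> where s: "\<sigma> \<subseteq> L" "card \<sigma> = d" "\<forall>j\<in>\<sigma>. 1 \<le> Poly_Mapping.lookup (u + ex (L - A)) j"
      unfolding UI_def by blast
    have "\<sigma> \<subseteq> L - A"
    proof
      fix j assume j: "j \<in> \<sigma>"
      show "j \<in> L - A"
      proof (rule ccontr)
        assume "j \<notin> L - A"
        then have "j \<in> A" "Poly_Mapping.lookup (ex (L - A)) j = 0" using j s(1) by (auto simp: lookup_ex)
        then show False using nu s(3) j by (auto simp: VA_def lookup_add)
      qed
    qed
    then have "card \<sigma> \<le> card (L - A)" by (simp add: card_mono)
    then show False using s(2) cLA d1 by simp
  qed
  ultimately show ?thesis by blast
qed

lemma PA_ass:
  fixes L :: "'v::finite set"
  assumes A: "A \<in> Afam L d" and d1: "1 \<le> d" and dn: "d \<le> card L"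
  shows "(PA A :: ('v,'k::field) mp set) \<in> ass_primes (IV L d)"
  unfolding ass_primes_def using PA_prime PA_colon[OF assms] by blast

lemma ass_contains:
  fixes L :: "'v::finite set"
  assumes Q: "Q \<in> ass_primes (IV L d :: ('v,'k::field) mp set)" and dn: "d \<le> card L"
  shows "\<exists>A\<in>Afam L d. PA A \<subseteq> Q"
proof -
  obtain f where Qp: "prime_ideal Q" and Qf: "Q = {g. g * f \<in> IV L d}"
    using Q unfolding ass_primes_def by blast
  have Qi: "is_ideal Q" using Qp by (simp add: prime_ideal_def)
  have IQ: "IV L d \<subseteq> Q" unfolding Qf using ideal_mult_right[OF IV_ideal] by blast
  define B where "B = {j\<in>L. var j \<notin> Q}"
  have "\<not> d \<le> card B"
  proof
    assume "d \<le> card B"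
    then obtain \<sigma> where s: "\<sigma> \<subseteq> B" "card \<sigma> = d" "finite \<sigma>" by (rule obtain_subset_with_card_n)
    have "sqmon \<sigma> \<in> IV L d" unfolding IV_def using s B_def by (intro span_base) auto
    then have "prod var \<sigma> \<in> Q" using IQ by (auto simp: sqmon_def)
    then obtain j where "j \<in> \<sigma>" "var j \<in> Q" using prime_prod[OF Qp s(3)] by blast
    then show False using s(1) B_def by blast
  qed
  moreover have "B \<subseteq> L" by (auto simp: B_def)
  moreover have "card B \<le> card L" using calculation(2) by (simp add: card_mono)
  ultimately have "card L - d + 1 \<le> card (L - B)"
    using dn by (simp add: card_Diff_subset)
  then obtain A where A: "A \<subseteq> L - B" "card A = card L - d + 1" by (meson obtain_subset_with_card_n)
  have "PA A \<subseteq> Q" unfolding PA_def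
    by (rule span_least[OF Qi]) (use A B_def in auto)
  moreover have "A \<in> Afam L d" using A by (auto simp: Afam_def)
  ultimately show ?thesis by blast
qed

definition JJ :: "'v set \<Rightarrow> nat \<Rightarrow> ('v,'k::field) mp set" where
  "JJ L d = (\<Inter>A\<in>Afam L d. ideal_pow (PA A) 2)"

lemma symb_eq:
  fixes L :: "'v::finite set"
  assumes d1: "1 \<le> d" and dn: "d \<le> card L"
  shows "symbolic_power (IV L d :: ('v,'k::field) mp set) 2 = JJ L d"
proof
  show "symbolic_power (IV L d :: ('v,'k) mp set) 2 \<subseteq> JJ L d"
    unfolding symbolic_power_def JJ_def using PA_ass[OF _ d1 dn] by blast
next
  show "JJ L d \<subseteq> symbolic_power (IV L d :: ('v,'k) mp set) 2"
  proof
    fix x assume x: "x \<in> (JJ L d :: ('v,'k) mp set)"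
    show "x \<in> symbolic_power (IV L d) 2"
      unfolding symbolic_power_def
    proof
      fix Q assume "Q \<in> ass_primes (IV L d :: ('v,'k) mp set)"
      then obtain A where "A \<in> Afam L d" "PA A \<subseteq> Q" using ass_contains dn by blast
      then show "x \<in> ideal_pow Q 2" using x ideal_pow_mono unfolding JJ_def by blast
    qed
  qed
qed

definition UJ :: "'v set \<Rightarrow> nat \<Rightarrow> ('v \<Rightarrow>\<^sub>0 nat) \<Rightarrow> bool" where
  "UJ L d a \<longleftrightarrow> (\<forall>A\<in>Afam L d. W2 A a)"

definition deg :: "('v::finite \<Rightarrow>\<^sub>0 nat) \<Rightarrow> nat" where
  "deg a = (\<Sum>v\<in>UNIV. Poly_Mapping.lookup a v)"

lemma deg_add: "deg (a + b) = deg a + deg b"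
  by (simp add: deg_def lookup_add sum.distrib)

lemma deg_ge: "deg a \<ge> (\<Sum>v\<in>S. Poly_Mapping.lookup a v)"
  unfolding deg_def by (rule sum_mono2) auto

lemma deg_zero: "deg a = 0 \<Longrightarrow> a = 0"
  by (rule poly_mapping_eqI) (simp add: deg_def)

lemma JJ_ideal: "is_ideal (JJ L d)"
  unfolding JJ_def by (rule is_ideal_Inter) (auto intro: ideal_pow_is_ideal)

lemma JJ_sub: "JJ L d \<subseteq> (mideal (UJ L d) :: ('v::finite,'k::field) mp set)"
proof
  fix f :: "('v,'k) mp" assume f: "f \<in> JJ L d"
  have "f \<in> mideal (W2 A)" if "A \<in> Afam L d" for A
    using f that PA_pow2[of A] unfolding JJ_def by blast
  then show "f \<in> mideal (UJ L d)" unfolding mideal_def UJ_def by blast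
qed

lemma comb:
  fixes L :: "'v::finite set"
  assumes U: "UJ L d a" and d1: "1 \<le> d" and dn: "d \<le> card L"
  shows "(\<exists>\<tau>\<subseteq>L. card \<tau> = d + 1 \<and> (\<forall>j\<in>\<tau>. 1 \<le> Poly_Mapping.lookup a j))
       \<or> (\<exists>\<sigma>\<subseteq>L. card \<sigma> = d \<and> (\<forall>j\<in>\<sigma>. 2 \<le> Poly_Mapping.lookup a j))"
proof -
  define T where "T = {j\<in>L. 1 \<le> Poly_Mapping.lookup a j}"
  have TL: "T \<subseteq> L" by (auto simp: T_def)
  have cT: "card T \<le> card L" using TL by (simp add: card_mono)
  have cLT: "card (L - T) = card L - card T" using TL by (simp add: card_Diff_subset)
  have zero: "Poly_Mapping.lookup a j = 0" if "j \<in> L - T" for j using that by (auto simp: T_def)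
  consider "d + 1 \<le> card T" | "card T < d" | "card T = d" by linarith
  then show ?thesis
  proof cases
    case 1
    then obtain \<tau> where "\<tau> \<subseteq> T" "card \<tau> = d + 1" by (meson obtain_subset_with_card_n)
    then show ?thesis using TL by (auto simp: T_def)
  next
    case 2
    then have "card L - d + 1 \<le> card (L - T)" using cLT dn by simp
    then obtain A where A: "A \<subseteq> L - T" "card A = card L - d + 1" by (meson obtain_subset_with_card_n)
    then have "A \<in> Afam L d" by (auto simp: Afam_def)
    then have "2 \<le> (\<Sum>j\<in>A. Poly_Mapping.lookup a j)" using U by (auto simp: UJ_def W2_def)
    moreover have "(\<Sum>j\<in>A. Poly_Mapping.lookup a j) = 0" using A zero by (auto intro: sum.neutral)
    ultimately show ?thesis by simp
  next
    case 3
    have "2 \<le> Poly_Mapping.lookup a j" if j: "j \<in> T" for j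
    proof -
      define A where "A = insert j (L - T)"
      have "card A = card L - d + 1" unfolding A_def using j cLT 3 by simp
      moreover have "A \<subseteq> L" using j TL by (auto simp: A_def)
      ultimately have "A \<in> Afam L d" by (auto simp: Afam_def)
      then have "2 \<le> (\<Sum>i\<in>A. Poly_Mapping.lookup a i)" using U by (auto simp: UJ_def W2_def)
      moreover have "(\<Sum>i\<in>A. Poly_Mapping.lookup a i) = Poly_Mapping.lookup a j"
        unfolding A_def using j zero by (simp add: sum.neutral)
      ultimately show ?thesis by simp
    qed
    then show ?thesis using 3 TL by blast
  qed
qed

lemma card_ge_sum: "finite \<tau> \<Longrightarrow> (\<forall>j\<in>\<tau>. k \<le> Poly_Mapping.lookup a j) \<Longrightarrow> k * card \<tau> \<le> (\<Sum>j\<in>\<tau>. Poly_Mapping.lookup a j)"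
  using sum_mono[of \<tau> "\<lambda>_. k" "Poly_Mapping.lookup a"] by (simp add: mult.commute)

lemma UJ_deg:
  fixes L :: "'v::finite set"
  assumes U: "UJ L d a" and d1: "1 \<le> d" and dn: "d \<le> card L"
  shows "d + 1 \<le> deg a"
  using comb[OF assms]
proof
  assume "\<exists>\<tau>\<subseteq>L. card \<tau> = d + 1 \<and> (\<forall>j\<in>\<tau>. 1 \<le> Poly_Mapping.lookup a j)"
  then obtain \<tau> where t: "card \<tau> = d + 1" "\<forall>j\<in>\<tau>. 1 \<le> Poly_Mapping.lookup a j" by blast
  show ?thesis using card_ge_sum[of \<tau> 1 a] t deg_ge[of a \<tau>] by simp
next
  assume "\<exists>\<sigma>\<subseteq>L. card \<sigma> = d \<and> (\<forall>j\<in>\<sigma>. 2 \<le> Poly_Mapping.lookup a j)"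
  then obtain \<sigma> where t: "card \<sigma> = d" "\<forall>j\<in>\<sigma>. 2 \<le> Poly_Mapping.lookup a j" by blast
  show ?thesis using card_ge_sum[of \<sigma> 2 a] t deg_ge[of a \<sigma>] d1 by simp
qed

lemma UI_deg:
  assumes "UI L d a" shows "d \<le> deg (a :: 'v::finite \<Rightarrow>\<^sub>0 nat)"
proof -
  obtain \<sigma> where s: "card \<sigma> = d" "\<forall>j\<in>\<sigma>. 1 \<le> Poly_Mapping.lookup a j"
    using assms unfolding UI_def by blast
  show ?thesis using card_ge_sum[of \<sigma> 1 a] s deg_ge[of a \<sigma>] by simp
qed

lemma I2_deg:
  "ideal_pow (IV L d) 2 \<subseteq> (mideal (\<lambda>a. 2 * d \<le> deg a) :: ('v::finite,'k::field) mp set)"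
proof (rule ideal_pow2_sub)
  show "is_ideal (mideal (\<lambda>a. 2 * d \<le> deg a) :: ('v,'k) mp set)"
    by (rule mideal_ideal) (simp add: deg_add)
next
  fix x y :: "('v,'k) mp" assume "x \<in> IV L d" "y \<in> IV L d"
  then have "x \<in> mideal (UI L d)" "y \<in> mideal (UI L d)" using IV_sub by auto
  then show "x * y \<in> mideal (\<lambda>a. 2 * d \<le> deg a)"
    by (rule mideal_mult) (auto simp: deg_add dest!: UI_deg)
qed

lemma JJ_deg:
  fixes L :: "'v::finite set"
  assumes d1: "1 \<le> d" and dn: "d \<le> card L"
  shows "JJ L d \<subseteq> (mideal (\<lambda>a. d + 1 \<le> deg a) :: ('v,'k::field) mp set)"
  using JJ_sub[of L d] UJ_deg[OF _ d1 dn] unfolding mideal_def by blast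

lemma var_PA: "j \<in> A \<Longrightarrow> (var j :: ('v,'k::field) mp) \<in> PA A"
  unfolding PA_def by (rule span_base) blast

lemma card_inter_ge:
  assumes "\<tau> \<subseteq> L" "A \<subseteq> L" "finite L"
  shows "card \<tau> + card A \<le> card L + card (\<tau> \<inter> A)"
proof -
  have "card (\<tau> \<union> A) + card (\<tau> \<inter> A) = card \<tau> + card A"
  proof -
    have fin: "finite \<tau>" "finite A" using assms finite_subset by auto
    show ?thesis using card_Un_Int[OF fin] by simp
  qed
  moreover have "card (\<tau> \<union> A) \<le> card L" using assms by (intro card_mono) auto
  ultimately show ?thesis by linarith
qed

lemma sq_in_JJ:
  fixes L :: "'v::finite set"
  assumes t: "\<tau> \<subseteq> L" "card \<tau> = d + 1" and dn: "d \<le> card L"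
  shows "(sqmon \<tau> :: ('v,'k::field) mp) \<in> JJ L d"
  unfolding JJ_def
proof
  fix A assume A: "A \<in> Afam L d"
  then have AL: "A \<subseteq> L" and cA: "card A = card L - d + 1" by (auto simp: Afam_def)
  have "2 \<le> card (\<tau> \<inter> A)" using card_inter_ge[OF t(1) AL] t cA dn by simp
  then obtain D where D: "D \<subseteq> \<tau> \<inter> A" "card D = 2" by (meson obtain_subset_with_card_n)
  then obtain j k where jk: "D = {j, k}" "j \<noteq> k" by (meson card_2_iff)
  have e: "\<tau> = insert j (insert k (\<tau> - {j, k}))" using D jk by auto
  have "sqmon \<tau> = (var j * var k) * (sqmon (\<tau> - {j, k}) :: ('v,'k) mp)"
    unfolding sqmon_def by (subst e) (simp add: jk mult.assoc)
  moreover have "(var j * var k :: ('v,'k) mp) \<in> ideal_pow (PA A) 2"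
    using D jk by (intro ideal_pow2_gen var_PA) auto
  ultimately show "(sqmon \<tau> :: ('v,'k) mp) \<in> ideal_pow (PA A) 2"
    by (simp add: ideal_mult_right[OF ideal_pow_is_ideal])
qed

lemma IV_PA:
  fixes L :: "'v::finite set"
  assumes A: "A \<in> Afam L d" and dn: "d \<le> card L"
  shows "(IV L d :: ('v,'k::field) mp set) \<subseteq> PA A"
  unfolding IV_def
proof (rule span_least, simp add: PA_def span_is_ideal, rule subsetI)
  have AL: "A \<subseteq> L" and cA: "card A = card L - d + 1" using A by (auto simp: Afam_def)
  fix x :: "('v,'k) mp" assume "x \<in> {sqmon \<sigma> |\<sigma>. \<sigma> \<subseteq> L \<and> card \<sigma> = d}"
  then obtain \<sigma> where s: "x = sqmon \<sigma>" "\<sigma> \<subseteq> L" "card \<sigma> = d" by blast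
  have "1 \<le> card (\<sigma> \<inter> A)" using card_inter_ge[OF s(2) AL] s cA dn by simp
  then obtain j where j: "j \<in> \<sigma>" "j \<in> A" by (metis card.empty disjoint_iff not_one_le_zero)
  have "sqmon \<sigma> = var j * (sqmon (\<sigma> - {j}) :: ('v,'k) mp)"
    unfolding sqmon_def using j by (metis finite prod.remove)
  then show "x \<in> PA A" using s(1) j ideal_mult_right[OF _ var_PA] by (simp add: PA_def span_is_ideal)
qed

lemma I2_JJ:
  fixes L :: "'v::finite set"
  assumes dn: "d \<le> card L"
  shows "ideal_pow (IV L d) 2 \<subseteq> (JJ L d :: ('v,'k::field) mp set)"
  unfolding JJ_def using ideal_pow_mono[OF IV_PA[OF _ dn]] by blast

lemma deg_ex: "deg (ex \<tau> :: 'v::finite \<Rightarrow>\<^sub>0 nat) = card \<tau>"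
proof -
  have "deg (ex \<tau>) = (\<Sum>v\<in>UNIV. if v \<in> \<tau> then 1 else 0)"
    unfolding deg_def by (rule sum.cong) (auto simp: lookup_ex)
  also have "\<dots> = card \<tau>" by (simp add: sum.If_cases)
  finally show ?thesis .
qed

lemma lookup_single0_mult: "Poly_Mapping.lookup (Poly_Mapping.single 0 c * (s :: ('v,'k::field) mp)) m = c * Poly_Mapping.lookup s m"
proof -
  have "Poly_Mapping.single 0 c * s = (\<Sum>a\<in>Poly_Mapping.keys s. Poly_Mapping.single a (c * Poly_Mapping.lookup s a))"
    by (subst poly_expand[of s]) (simp add: sum_distrib_left mult_single)
  then show ?thesis
    by (simp add: lookup_sum lookup_single when_def in_keys_iff)
qed

lemma fun_sum_apply: "(sum f F) x = (\<Sum>i\<in>F. f i x)"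
  by (induction F rule: infinite_finite_induct) auto

lemma lower_bound:
  fixes L :: "'v::finite set" and S :: "('v,'k::field) mp set"
  assumes d2: "2 \<le> d" and dn: "d + 1 \<le> card L"
    and S: "finite S" "S \<subseteq> JJ L d" "ideal_span (S \<union> ideal_pow (IV L d) 2) = JJ L d"
  shows "card {\<tau>. \<tau> \<subseteq> L \<and> card \<tau> = d + 1} \<le> card S"
proof -
  interpret V: vector_space "\<lambda>c (f :: ('v \<Rightarrow>\<^sub>0 nat) \<Rightarrow> 'k) x. c * f x"
    by unfold_locales (simp_all add: fun_eq_iff algebra_simps)
  define Tset where "Tset = {\<tau>. \<tau> \<subseteq> L \<and> card \<tau> = d + 1}"
  define M where "M = ex ` Tset"
  define \<phi> where "\<phi> g = (\<lambda>m. if m \<in> M then Poly_Mapping.lookup g m else 0)" for g :: "('v,'k) mp"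
  define \<delta> where "\<delta> m = (\<lambda>x. if x = m then (1::'k) else 0)" for m :: "'v \<Rightarrow>\<^sub>0 nat"
  have degM: "deg m = d + 1" if "m \<in> M" for m using that by (auto simp: M_def Tset_def deg_ex)
  have \<phi>sum: "\<phi> (sum h F) = (\<Sum>i\<in>F. \<phi> (h i))" for h :: "('v,'k) mp \<Rightarrow> ('v,'k) mp" and F
    by (rule ext) (simp add: \<phi>_def lookup_sum fun_sum_apply)
  have \<phi>J: "\<phi> (r * s) = (\<lambda>x. Poly_Mapping.lookup r 0 * \<phi> s x)" if s: "s \<in> JJ L d" for r s
  proof -
    define r' where "r' = restr (\<lambda>x. \<not> x = 0) r"
    have rs: "r = Poly_Mapping.single 0 (Poly_Mapping.lookup r 0) + r'"
      using restr_split[of r "\<lambda>x. x = 0"] restr_single[of 0 r] r'_def by simp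
    have kr': "Poly_Mapping.keys r' \<subseteq> {x. x \<noteq> 0}" using restr_keys r'_def by blast
    have sJ: "s \<in> mideal (\<lambda>a. d + 1 \<le> deg a)" using JJ_deg[of d L] s d2 dn by auto
    have "r' * s \<in> mideal (\<lambda>a. d + 2 \<le> deg a)"
    proof (rule mideal_mult[OF _ sJ])
      show "r' \<in> mideal (\<lambda>a. a \<noteq> 0)" using kr' by (auto simp: mideal_def)
    next
      fix a b :: "'v \<Rightarrow>\<^sub>0 nat" assume ab: "a \<noteq> 0" "d + 1 \<le> deg b"
      have "deg a \<noteq> 0" using deg_zero[of a] ab(1) by blast
      then show "d + 2 \<le> deg (a + b)" using ab(2) unfolding deg_add by linarith
    qed
    then have z: "Poly_Mapping.lookup (r' * s) m = 0" if "m \<in> M" for m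
    proof -
      have "m \<notin> Poly_Mapping.keys (r' * s)" using degM[OF that] \<open>r' * s \<in> _\<close> by (force simp: mideal_def)
      then show ?thesis by (simp add: in_keys_iff)
    qed
    have "r * s = Poly_Mapping.single 0 (Poly_Mapping.lookup r 0) * s + r' * s"
      using rs by (metis distrib_right)
    then show ?thesis
      by (auto simp: \<phi>_def fun_eq_iff lookup_add lookup_single0_mult z)
  qed
  have \<phi>I: "\<phi> (r * s) = 0" if s: "s \<in> ideal_pow (IV L d) 2" for r s
  proof -
    have "r * s \<in> ideal_pow (IV L d) 2" by (rule ideal_mult_left[OF ideal_pow_is_ideal s])
    then have "r * s \<in> mideal (\<lambda>a. 2 * d \<le> deg a)" using I2_deg by blast
    then have "Poly_Mapping.lookup (r * s) m = 0" if "m \<in> M" for m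
    proof -
      have "m \<notin> Poly_Mapping.keys (r * s)" using degM[OF that] d2 \<open>r * s \<in> mideal _\<close> by (force simp: mideal_def)
      then show ?thesis by (simp add: in_keys_iff)
    qed
    then show ?thesis by (auto simp: \<phi>_def fun_eq_iff)
  qed
  have \<phi>span: "\<phi> g \<in> V.span (\<phi> ` S)" if g: "g \<in> JJ L d" for g
  proof -
    have "g \<in> ideal_span (S \<union> ideal_pow (IV L d) 2)" using g S(3) by simp
    then obtain F r where F: "finite F" "F \<subseteq> S \<union> ideal_pow (IV L d) 2" "g = (\<Sum>s\<in>F. r s * s)"
      using span_elim by blast
    have "\<phi> g = (\<Sum>s\<in>F. \<phi> (r s * s))" using F(3) \<phi>sum by simp
    also have "\<dots> \<in> V.span (\<phi> ` S)"
    proof (rule V.span_sum)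
      fix s assume s: "s \<in> F"
      show "\<phi> (r s * s) \<in> V.span (\<phi> ` S)"
      proof (cases "s \<in> S")
        case True
        then have "\<phi> (r s * s) = (\<lambda>x. Poly_Mapping.lookup (r s) 0 * \<phi> s x)" using \<phi>J S(2) by blast
        moreover have "\<phi> s \<in> V.span (\<phi> ` S)" using True by (intro V.span_base) blast
        ultimately show ?thesis using V.span_scale by metis
      next
        case False
        then have "\<phi> (r s * s) = 0" using s F(2) \<phi>I by blast
        then show ?thesis using V.span_zero by metis
      qed
    qed
    finally show ?thesis .
  qed
  have \<phi>mon: "\<phi> (mon m) = \<delta> m" if "m \<in> M" for m
    using that by (auto simp: \<phi>_def \<delta>_def fun_eq_iff mon_def lookup_single when_def)
  have Dsub: "\<delta> ` M \<subseteq> V.span (\<phi> ` S)"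
  proof
    fix v assume "v \<in> \<delta> ` M"
    then obtain \<tau> where t: "\<tau> \<in> Tset" "v = \<delta> (ex \<tau>)" by (auto simp: M_def)
    have "sqmon \<tau> \<in> JJ L d" using t(1) sq_in_JJ[of \<tau> L d] dn by (auto simp: Tset_def)
    then have "\<phi> (mon (ex \<tau>)) \<in> V.span (\<phi> ` S)" using \<phi>span by (simp add: sqmon_mon)
    then show "v \<in> V.span (\<phi> ` S)" using \<phi>mon t by (auto simp: M_def)
  qed
  have indep: "\<not> V.dependent (\<delta> ` M)"
  proof
    assume "V.dependent (\<delta> ` M)"
    then obtain t u where tu: "finite t" "t \<subseteq> \<delta> ` M" "(\<Sum>v\<in>t. (\<lambda>x. u v * v x)) = 0" "\<exists>v\<in>t. u v \<noteq> 0"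
      unfolding V.dependent_explicit by blast
    then obtain v where v: "v \<in> t" "u v \<noteq> 0" by blast
    then obtain m where m: "v = \<delta> m" using tu(2) by blast
    have "0 = (\<Sum>v\<in>t. (\<lambda>x. u v * v x)) m" using tu(3) by simp
    also have "\<dots> = (\<Sum>v'\<in>t. u v' * v' m)" by (simp add: fun_sum_apply)
    also have "\<dots> = (\<Sum>v'\<in>t. if v' = v then u v else 0)"
    proof (rule sum.cong)
      fix v' assume "v' \<in> t"
      then obtain m' where m': "v' = \<delta> m'" using tu(2) by blast
      show "u v' * v' m = (if v' = v then u v else 0)"
      proof (cases "m' = m")
        case True
        then have "v' = v" using m m' by simp
        then show ?thesis using m by (simp add: \<delta>_def)
      next
        case False
        then have "v' m = 0" using m' by (simp add: \<delta>_def)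
        moreover have "v m = 1" using m by (simp add: \<delta>_def)
        ultimately have "v' \<noteq> v" by auto
        then show ?thesis using \<open>v' m = 0\<close> by simp
      qed
    qed simp
    also have "\<dots> = u v" using v tu(1) by simp
    finally show False using v by simp
  qed
  have "finite (\<delta> ` M) \<and> card (\<delta> ` M) \<le> card (\<phi> ` S)"
    by (rule V.independent_span_bound[OF _ indep Dsub]) (use S in simp)
  moreover have "card (\<phi> ` S) \<le> card S" using S(1) by (rule card_image_le)
  moreover have "inj_on \<delta> M" by (auto simp: inj_on_def \<delta>_def fun_eq_iff)
  moreover have "inj_on ex Tset" by (rule inj_onI, rule ex_inj) simp_all
  ultimately have "card Tset \<le> card S"
    using card_image[of \<delta> M] card_image[of ex Tset] unfolding M_def by linarith
  then show ?thesis by (simp add: Tset_def)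
qed

lemma upper_span:
  fixes L :: "'v::finite set"
  assumes d2: "2 \<le> d" and dn: "d + 1 \<le> card L"
  shows "ideal_span (sqmon ` {\<tau>. \<tau> \<subseteq> L \<and> card \<tau> = d + 1} \<union> ideal_pow (IV L d) 2)
           = (JJ L d :: ('v,'k::field) mp set)"
proof
  show "ideal_span (sqmon ` {\<tau>. \<tau> \<subseteq> L \<and> card \<tau> = d + 1} \<union> ideal_pow (IV L d) 2)
           \<subseteq> (JJ L d :: ('v,'k::field) mp set)"
  proof (rule span_least[OF JJ_ideal])
    have dn': "d \<le> card L" using dn by simp
    show "sqmon ` {\<tau>. \<tau> \<subseteq> L \<and> card \<tau> = d + 1} \<union> ideal_pow (IV L d) 2 \<subseteq> (JJ L d :: ('v,'k) mp set)"
      using sq_in_JJ[OF _ _ dn'] I2_JJ[OF dn'] by blast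
  qed
next
  let ?K = "ideal_span (sqmon ` {\<tau>. \<tau> \<subseteq> L \<and> card \<tau> = d + 1} \<union> ideal_pow (IV L d) 2) :: ('v,'k) mp set"
  have K: "is_ideal ?K" by (rule span_is_ideal)
  show "JJ L d \<subseteq> ?K"
  proof
    fix g :: "('v,'k) mp" assume g: "g \<in> JJ L d"
    show "g \<in> ?K"
    proof (rule in_ideal_by_monomials[OF K])
      fix a assume a: "a \<in> Poly_Mapping.keys g"
      then have U: "UJ L d a" using JJ_sub g unfolding mideal_def by blast
      from comb[OF U] d2 dn
      consider (t) \<tau> where "\<tau> \<subseteq> L" "card \<tau> = d + 1" "\<forall>j\<in>\<tau>. 1 \<le> Poly_Mapping.lookup a j"
        | (s) \<sigma> where "\<sigma> \<subseteq> L" "card \<sigma> = d" "\<forall>j\<in>\<sigma>. 2 \<le> Poly_Mapping.lookup a j"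
        by auto
      then show "(mon a :: ('v,'k) mp) \<in> ?K"
      proof cases
        case t
        have "(mon (ex \<tau>) :: ('v,'k) mp) \<in> ?K"
          using t by (intro span_base) (auto simp: sqmon_mon[symmetric])
        then show ?thesis
          by (rule mon_dvd_in[OF K, rotated]) (use t in \<open>auto simp: lookup_ex\<close>)
      next
        case s
        have sI: "(sqmon \<sigma> :: ('v,'k) mp) \<in> IV L d"
          unfolding IV_def using s by (intro span_base) auto
        have "(mon (ex \<sigma> + ex \<sigma>) :: ('v,'k) mp) \<in> ?K"
          using ideal_pow2_gen[OF sI sI] by (intro span_base) (auto simp: sqmon_mon mon_mult)
        then show ?thesis
          by (rule mon_dvd_in[OF K, rotated]) (use s in \<open>auto simp: lookup_ex lookup_add\<close>)
      qed
    qed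
  qed
qed

lemma sdefect_IV:
  fixes L :: "'v::finite set"
  assumes d2: "2 \<le> d" and dn: "d + 1 \<le> card L"
  shows "sdefect (IV L d :: ('v,'k::field) mp set) 2 = card L choose (d + 1)"
proof -
  define Tset where "Tset = {\<tau>. \<tau> \<subseteq> L \<and> card \<tau> = d + 1}"
  have cT: "card Tset = card L choose (d + 1)" unfolding Tset_def by (rule n_subsets) simp
  have inj: "inj_on (sqmon :: 'v set \<Rightarrow> ('v,'k) mp) Tset"
  proof (rule inj_onI)
    fix x y assume "x \<in> Tset" "y \<in> Tset" "(sqmon x :: ('v,'k) mp) = sqmon y"
    then have "(mon (ex x) :: ('v,'k) mp) = mon (ex y)" by (simp add: sqmon_mon)
    then show "x = y" by (intro ex_inj mon_inj) simp_all
  qed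
  have P: "\<exists>S. finite S \<and> card S = card L choose (d + 1) \<and> S \<subseteq> (JJ L d :: ('v,'k) mp set) \<and>
      ideal_span (S \<union> ideal_pow (IV L d) 2) = JJ L d"
  proof (intro exI conjI)
    show "finite (sqmon ` Tset :: ('v,'k) mp set)" by simp
    show "card (sqmon ` Tset :: ('v,'k) mp set) = card L choose (d + 1)"
      using card_image[OF inj] cT by simp
    show "(sqmon ` Tset :: ('v,'k) mp set) \<subseteq> JJ L d"
      using sq_in_JJ[of _ L d] dn unfolding Tset_def by auto
    show "ideal_span (sqmon ` Tset \<union> ideal_pow (IV L d) 2) = (JJ L d :: ('v,'k) mp set)"
      unfolding Tset_def by (rule upper_span[OF d2 dn])
  qed
  have "mu_quot (JJ L d :: ('v,'k) mp set) (ideal_pow (IV L d) 2) = card L choose (d + 1)"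
    unfolding mu_quot_def
  proof (rule Least_equality)
    show "\<exists>S. finite S \<and> card S = card L choose (d + 1) \<and> S \<subseteq> (JJ L d :: ('v,'k) mp set) \<and>
      ideal_span (S \<union> ideal_pow (IV L d) 2) = JJ L d" by (rule P)
  next
    fix k assume "\<exists>S. finite S \<and> card S = k \<and> S \<subseteq> (JJ L d :: ('v,'k) mp set) \<and>
      ideal_span (S \<union> ideal_pow (IV L d) 2) = JJ L d"
    then obtain S :: "('v,'k) mp set" where S: "finite S" "card S = k" "S \<subseteq> JJ L d"
      "ideal_span (S \<union> ideal_pow (IV L d) 2) = JJ L d" by blast
    show "card L choose (d + 1) \<le> k"
      using lower_bound[OF d2 dn S(1) S(3) S(4)] cT S(2) unfolding Tset_def by simp
  qed
  moreover have "symbolic_power (IV L d :: ('v,'k) mp set) 2 = JJ L d"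
    by (rule symb_eq) (use d2 dn in auto)
  ultimately show ?thesis unfolding sdefect_def by simp
qed

lemma edge_sub:
  fixes c :: "'v::finite"
  shows "(edge_ideal {{c, j} | j. j \<noteq> c} :: ('v,'k::field) mp set)
     \<subseteq> mideal (\<lambda>a. 1 \<le> Poly_Mapping.lookup a c \<and> (\<exists>j. j \<noteq> c \<and> 1 \<le> Poly_Mapping.lookup a j))"
  unfolding edge_ideal_def
proof (rule span_least)
  show "is_ideal (mideal (\<lambda>a. 1 \<le> Poly_Mapping.lookup a c \<and> (\<exists>j. j \<noteq> c \<and> 1 \<le> Poly_Mapping.lookup a j)) :: ('v,'k) mp set)"
    by (rule mideal_ideal) (auto simp: lookup_add intro: order_trans[OF _ le_add2])
next
  show "{var u * var v |u v. {u, v} \<in> {{c, j} |j. j \<noteq> c}}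
    \<subseteq> (mideal (\<lambda>a. 1 \<le> Poly_Mapping.lookup a c \<and> (\<exists>j. j \<noteq> c \<and> 1 \<le> Poly_Mapping.lookup a j)) :: ('v,'k) mp set)"
  proof
    fix x :: "('v,'k) mp" assume "x \<in> {var u * var v |u v. {u, v} \<in> {{c, j} |j. j \<noteq> c}}"
    then obtain u v j where x: "x = var u * var v" "{u, v} = {c, j}" "j \<noteq> c" by blast
    have x': "x = mon (Poly_Mapping.single u 1 + Poly_Mapping.single v 1)"
      using x(1) by (simp add: var_mon mon_mult)
    from x(2,3) have "(u = c \<and> v = j) \<or> (u = j \<and> v = c)" by (auto simp: doubleton_eq_iff)
    then show "x \<in> mideal (\<lambda>a. 1 \<le> Poly_Mapping.lookup a c \<and> (\<exists>j. j \<noteq> c \<and> 1 \<le> Poly_Mapping.lookup a j))"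
      unfolding x' mon_mideal using x(3)
      by (auto simp: lookup_add lookup_single when_def intro!: exI[of _ j])
  qed
qed

lemma not_c_in:
  fixes c :: "'v::finite"
  assumes "c \<notin> \<sigma>"
  shows "\<sigma> \<in> sr_complex (edge_ideal {{c, j} | j. j \<noteq> c} :: ('v,'k::field) mp set)"
proof -
  have "(sqmon \<sigma> :: ('v,'k) mp) \<notin> mideal (\<lambda>a. 1 \<le> Poly_Mapping.lookup a c \<and> (\<exists>j. j \<noteq> c \<and> 1 \<le> Poly_Mapping.lookup a j))"
    using assms by (simp add: sqmon_mon lookup_ex)
  then show ?thesis using edge_sub[of c] unfolding sr_complex_def by blast
qed

lemma c_notin:
  fixes c :: "'v::finite"
  assumes "c \<in> \<sigma>" "2 \<le> card \<sigma>"
  shows "\<sigma> \<notin> sr_complex (edge_ideal {{c, j} | j. j \<noteq> c} :: ('v,'k::field) mp set)"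
proof -
  have "\<not> \<sigma> \<subseteq> {c}"
  proof
    assume "\<sigma> \<subseteq> {c}"
    then have "card \<sigma> \<le> card {c}" using card_mono[of "{c}" \<sigma>] by simp
    then show False using assms by simp
  qed
  then obtain j where j: "j \<in> \<sigma>" "j \<noteq> c" by blast
  have cj: "c \<noteq> j" using j by auto
  have e: "\<sigma> = insert c (insert j (\<sigma> - {c, j}))" using j assms by auto
  have "sqmon \<sigma> = (var c * var j) * (sqmon (\<sigma> - {c, j}) :: ('v,'k) mp)"
    unfolding sqmon_def using j by (subst e) (simp add: mult.assoc cj)
  moreover have g: "(var c * var j :: ('v,'k) mp) \<in> edge_ideal {{c, j} | j. j \<noteq> c}"
    unfolding edge_ideal_def
    by (intro span_base CollectI exI[of _ c] exI[of _ j]) (use j in auto)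
  moreover have EI: "is_ideal (edge_ideal {{c, j} | j. j \<noteq> c} :: ('v,'k) mp set)"
    unfolding edge_ideal_def by (rule span_is_ideal)
  ultimately have "(sqmon \<sigma> :: ('v,'k) mp) \<in> edge_ideal {{c, j} | j. j \<noteq> c}"
    using ideal_mult_right[OF EI g] by simp
  then show ?thesis unfolding sr_complex_def by blast
qed

theorem corollary6p5:
  fixes c :: "'v::finite" and n :: nat
  assumes "card (UNIV :: 'v set) = n + 1" and "n \<ge> 1"
  defines "E \<equiv> {{c, j} | j. j \<noteq> c}"
  defines "\<Delta> \<equiv> sr_complex (edge_ideal E :: (('v \<Rightarrow>\<^sub>0 nat) \<Rightarrow>\<^sub>0 'k::field) set)"
  shows "sdefect_poly TYPE('k) \<Delta> 2
           = monom 1 2 * (\<Sum>i\<in>{1..n-2}. monom (int (n choose (i + 2))) i)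
       \<and> sdefect_poly TYPE('k) \<Delta> 2
           = monom 1 2 * (\<Sum>i\<in>{1..n-2}. monom (int (fvec \<Delta> (i + 1))) i)"
proof -
  define L where "L = (UNIV :: 'v set) - {c}"
  have cL: "card L = n" unfolding L_def using assms(1) by (simp add: card_Diff_singleton)
  have in1: "\<sigma> \<in> \<Delta>" if "\<sigma> \<subseteq> L" for \<sigma>
    unfolding \<Delta>_def E_def by (rule not_c_in) (use that L_def in auto)
  have in2: "\<sigma> \<subseteq> L" if "\<sigma> \<in> \<Delta>" "2 \<le> card \<sigma>" for \<sigma>
    using c_notin[of c \<sigma>, where 'k='k] that unfolding \<Delta>_def E_def L_def by blast
  have iff: "(\<sigma> \<in> \<Delta> \<and> card \<sigma> = k) \<longleftrightarrow> (\<sigma> \<subseteq> L \<and> card \<sigma> = k)" if "2 \<le> k" for \<sigma> k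
    using in1 in2 that by auto
  have le: "card \<sigma> \<le> n" if "\<sigma> \<in> \<Delta>" for \<sigma>
  proof (cases "2 \<le> card \<sigma>")
    case True
    then have "\<sigma> \<subseteq> L" using in2 that by blast
    then show ?thesis using cL card_mono[of L \<sigma>] by simp
  next
    case False then show ?thesis using assms(2) by simp
  qed
  have "Max (card ` \<Delta>) = n"
    by (rule Max_eqI) (use le in1[of L] cL in auto)
  then have cd: "cdim \<Delta> - 1 = n - 2" by (simp add: cdim_def)
  have skel: "skel_ideal \<Delta> i = (IV L (i + 1) :: ('v,'k) mp set)" if "1 \<le> i" for i
  proof -
    have "{sqmon \<sigma> | \<sigma>. \<sigma> \<in> \<Delta> \<and> card \<sigma> = i + 1} = ({sqmon \<sigma> | \<sigma>. \<sigma> \<subseteq> L \<and> card \<sigma> = i + 1} :: ('v,'k) mp set)"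
      using iff[of "i + 1"] that by auto
    then show ?thesis unfolding skel_ideal_def IV_def by simp
  qed
  have fv: "fvec \<Delta> (i + 1) = n choose (i + 2)" if "1 \<le> i" for i
  proof -
    have "{\<sigma>\<in>\<Delta>. card \<sigma> = i + 1 + 1} = {\<sigma>. \<sigma> \<subseteq> L \<and> card \<sigma> = i + 2}"
      using iff[of "i + 2"] that by auto
    then show ?thesis unfolding fvec_def using n_subsets[of L "i + 2"] cL by simp
  qed
  have sd: "sdefect (skel_ideal \<Delta> i :: ('v,'k) mp set) 2 = n choose (i + 2)" if "i \<in> {1..n-2}" for i
  proof -
    have "2 \<le> i + 1" "i + 1 + 1 \<le> card L" using that cL by auto
    then show ?thesis using skel[of i] that sdefect_IV[of "i + 1" L, where 'k='k] cL by simp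
  qed
  have A: "sdefect_poly TYPE('k) \<Delta> 2 = monom 1 2 * (\<Sum>i\<in>{1..n-2}. monom (int (n choose (i + 2))) i)"
  proof -
    have "(\<Sum>i\<in>{1..n-2}. monom (int (sdefect (skel_ideal \<Delta> i :: ('v,'k) mp set) 2)) i)
        = (\<Sum>i\<in>{1..n-2}. monom (int (n choose (i + 2))) i)"
      by (rule sum.cong) (simp_all only: sd)
    then show ?thesis unfolding sdefect_poly_def cd by simp
  qed
  have B: "(\<Sum>i\<in>{1..n-2}. monom (int (n choose (i + 2))) i) = (\<Sum>i\<in>{1..n-2}. monom (int (fvec \<Delta> (i + 1))) i)"
  proof (rule sum.cong)
    fix i assume "i \<in> {1..n-2}"
    then have "fvec \<Delta> (i + 1) = n choose (i + 2)" using fv by simp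
    then show "monom (int (n choose (i + 2))) i = monom (int (fvec \<Delta> (i + 1))) i" by simp
  qed simp
  show ?thesis using A B by simp
qed

end
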